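(* Let $n\ge 7$ and let $CU_n$ be the set of chemical unicyclic graphs on $n$ vertices. Define the following subsets of $CU_n$ (in each, all $m_{i,j}$ not listed are $0$): $\alpha_1$: $n_2=n$ and $m_{2,2}=n$; $\alpha_2$: $n_4=0,n_3=1,n_2=n-2,n_1=1$, $m_{1,3}=1$, $m_{2,3}=2$, $m_{2,2}=n-3$; $\alpha_3$: $n_4=0,n_3=1,n_2=n-2,n_1=1$, $m_{1,2}=1$, $m_{2,3}=3$, $m_{2,2}=n-4$; $\alpha_9$: $n_4=0,n_3=2,n_2=n-4,n_1=2$, $m_{1,2}=2$, $m_{2,3}=4$, $m_{3,3}=1$, $m_{2,2}=n-7$. Let $G_1\in\alpha_1$, $G_2\in\alpha_3$, $G_3\in\alpha_2$, $G_4\in\alpha_9$, and let $G\in CU_n$ not belong to $\alpha_1\cup\alpha_2\cup\alpha_3\cup\alpha_9$. Then $SO_{red}(G_1)<SO_{red}(G_2)<SO_{red}(G_3)<SO_{red}(G_4)<SO_{red}(G)$.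
   Context: All graphs are simple and connected. A chemical graph is a graph with maximum degree at most $4$; a unicyclic graph is a connected graph with $n$ vertices and $n$ edges. $d_G(u)$ is the degree of $u$, $n_i$ the number of vertices of degree $i$, and $m_{i,j}$ the number of edges joining a vertex of degree $i$ to a vertex of degree $j$. The reduced Sombor index is $SO_{red}(G)=\sum_{uv\in E(G)}\sqrt{(d_G(u)-1)^2+(d_G(v)-1)^2}$. *)

theory Defs
  imports Complex_Main
begin

definition simple_graph :: "'a set \<Rightarrow> 'a set set \<Rightarrow> bool" where
  "simple_graph V E \<longleftrightarrow> finite V \<and> (\<forall>e\<in>E. \<exists>u v. e = {u, v} \<and> u \<noteq> v \<and> u \<in> V \<and> v \<in> V)"

definition adj :: "'a set set \<Rightarrow> 'a \<Rightarrow> 'a \<Rightarrow> bool" where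
  "adj E u v \<longleftrightarrow> {u, v} \<in> E \<and> u \<noteq> v"

definition connected_graph :: "'a set \<Rightarrow> 'a set set \<Rightarrow> bool" where
  "connected_graph V E \<longleftrightarrow> V \<noteq> {} \<and> (\<forall>u\<in>V. \<forall>v\<in>V. (adj E)\<^sup>*\<^sup>* u v)"

definition degree :: "'a set set \<Rightarrow> 'a \<Rightarrow> nat" where
  "degree E v = card {e\<in>E. v \<in> e}"

definition chemical_unicyclic :: "nat \<Rightarrow> 'a set \<Rightarrow> 'a set set \<Rightarrow> bool" where
  "chemical_unicyclic n V E \<longleftrightarrow> simple_graph V E \<and> connected_graph V E \<and>
     card V = n \<and> card E = n \<and> (\<forall>v\<in>V. degree E v \<le> 4)"

definition nv :: "'a set \<Rightarrow> 'a set set \<Rightarrow> nat \<Rightarrow> nat" where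
  "nv V E i = card {v\<in>V. degree E v = i}"

definition me :: "'a set set \<Rightarrow> nat \<Rightarrow> nat \<Rightarrow> nat" where
  "me E i j = card {e\<in>E. \<exists>u v. e = {u, v} \<and> degree E u = i \<and> degree E v = j}"

text \<open>Reduced Sombor index: for an edge e = {u,v}, the sum over x in e of
  (d(x)-1)^2 equals (d(u)-1)^2 + (d(v)-1)^2.\<close>
definition SO_red :: "'a set set \<Rightarrow> real" where
  "SO_red E = (\<Sum>e\<in>E. sqrt (\<Sum>x\<in>e. (real (degree E x) - 1)^2))"

definition edge_profile :: "'a set set \<Rightarrow> (nat \<Rightarrow> nat \<Rightarrow> nat) \<Rightarrow> bool" where
  "edge_profile E p \<longleftrightarrow> (\<forall>i j. 1 \<le> i \<longrightarrow> i \<le> j \<longrightarrow> j \<le> 4 \<longrightarrow> me E i j = p i j)"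

definition alpha1 :: "nat \<Rightarrow> 'a set \<Rightarrow> 'a set set \<Rightarrow> bool" where
  "alpha1 n V E \<longleftrightarrow> chemical_unicyclic n V E \<and> nv V E 2 = n \<and>
     edge_profile E (\<lambda>i j. if (i, j) = (2, 2) then n else 0)"

definition alpha2 :: "nat \<Rightarrow> 'a set \<Rightarrow> 'a set set \<Rightarrow> bool" where
  "alpha2 n V E \<longleftrightarrow> chemical_unicyclic n V E \<and>
     nv V E 4 = 0 \<and> nv V E 3 = 1 \<and> nv V E 2 = n - 2 \<and> nv V E 1 = 1 \<and>
     edge_profile E (\<lambda>i j. if (i, j) = (1, 3) then 1 else if (i, j) = (2, 3) then 2
                         else if (i, j) = (2, 2) then n - 3 else 0)"

definition alpha3 :: "nat \<Rightarrow> 'a set \<Rightarrow> 'a set set \<Rightarrow> bool" where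
  "alpha3 n V E \<longleftrightarrow> chemical_unicyclic n V E \<and>
     nv V E 4 = 0 \<and> nv V E 3 = 1 \<and> nv V E 2 = n - 2 \<and> nv V E 1 = 1 \<and>
     edge_profile E (\<lambda>i j. if (i, j) = (1, 2) then 1 else if (i, j) = (2, 3) then 3
                         else if (i, j) = (2, 2) then n - 4 else 0)"

definition alpha9 :: "nat \<Rightarrow> 'a set \<Rightarrow> 'a set set \<Rightarrow> bool" where
  "alpha9 n V E \<longleftrightarrow> chemical_unicyclic n V E \<and>
     nv V E 4 = 0 \<and> nv V E 3 = 2 \<and> nv V E 2 = n - 4 \<and> nv V E 1 = 2 \<and>
     edge_profile E (\<lambda>i j. if (i, j) = (1, 2) then 2 else if (i, j) = (2, 3) then 4
                         else if (i, j) = (3, 3) then 1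
                         else if (i, j) = (2, 2) then n - 7 else 0)"

end

theory Submission
  imports Defs
begin

lemma sg_edge:
  assumes "simple_graph V E" "e \<in> E"
  obtains u v where "e = {u, v}" "u \<noteq> v" "u \<in> V" "v \<in> V"
proof -
  from assms have "\<exists>u v. e = {u, v} \<and> u \<noteq> v \<and> u \<in> V \<and> v \<in> V"
    unfolding simple_graph_def by simp
  then show ?thesis using that by auto
qed

lemma sg_finite:
  assumes "simple_graph V E" shows "finite E" "finite V"
proof -
  show "finite V" using assms by (simp add: simple_graph_def)
  have "E \<subseteq> Pow V" using assms unfolding simple_graph_def by auto
  then show "finite E" using \<open>finite V\<close> finite_subset by blast
qed

lemma sg_subset: "simple_graph V E \<Longrightarrow> e \<in> E \<Longrightarrow> e \<subseteq> V"
  by (auto elim: sg_edge)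

lemma degree_pos: "simple_graph V E \<Longrightarrow> e \<in> E \<Longrightarrow> x \<in> e \<Longrightarrow> degree E x \<ge> 1"
proof -
  assume a: "simple_graph V E" "e \<in> E" "x \<in> e"
  have "finite {e\<in>E. x \<in> e}" using sg_finite(1)[OF a(1)] by simp
  moreover have "e \<in> {e\<in>E. x \<in> e}" using a by simp
  ultimately have "card {e\<in>E. x \<in> e} \<noteq> 0" by (metis card_0_eq empty_iff)
  thus ?thesis by (simp add: degree_def)
qed

definition ty :: "'a set set \<Rightarrow> 'a set \<Rightarrow> nat \<times> nat" where
  "ty E e = (Min (degree E ` e), Max (degree E ` e))"

lemma ty_pair: "ty E {u, v} = (min (degree E u) (degree E v), max (degree E u) (degree E v))"
  by (simp add: ty_def)

lemma sum_by_type: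
  fixes h :: "'x \<Rightarrow> 'b::comm_semiring_1"
  assumes "finite S" "g ` S \<subseteq> T" "finite T" "\<And>x. x \<in> S \<Longrightarrow> h x = H (g x)"
  shows "sum h S = (\<Sum>t\<in>T. of_nat (card {x\<in>S. g x = t}) * H t)"
proof -
  have "sum h S = (\<Sum>t\<in>T. sum h {x\<in>S. g x = t})"
    using sum.group[OF assms(1,3,2), of h] by simp
  also have "\<dots> = (\<Sum>t\<in>T. of_nat (card {x\<in>S. g x = t}) * H t)"
  proof (rule sum.cong[OF refl])
    fix t assume "t \<in> T"
    have "sum h {x\<in>S. g x = t} = sum (\<lambda>_. H t) {x\<in>S. g x = t}"
      using assms(4) by (intro sum.cong) auto
    thus "sum h {x\<in>S. g x = t} = of_nat (card {x\<in>S. g x = t}) * H t" by simp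
  qed
  finally show ?thesis .
qed

lemma me_ty:
  assumes "simple_graph V E" "i \<le> j"
  shows "me E i j = card {e\<in>E. ty E e = (i, j)}"
proof -
  have "{e\<in>E. \<exists>u v. e = {u, v} \<and> degree E u = i \<and> degree E v = j} = {e\<in>E. ty E e = (i, j)}"
  proof (intro Collect_cong conj_cong refl)
    fix e assume "e \<in> E"
    then obtain u v where e: "e = {u, v}" "u \<noteq> v" by (rule sg_edge[OF assms(1)])
    show "(\<exists>u v. e = {u, v} \<and> degree E u = i \<and> degree E v = j) = (ty E e = (i, j))"
    proof
      assume "\<exists>u v. e = {u, v} \<and> degree E u = i \<and> degree E v = j"
      then obtain u' v' where "e = {u', v'}" "degree E u' = i" "degree E v' = j" by blast
      then show "ty E e = (i, j)" using assms(2) by (auto simp: ty_pair)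
    next
      assume "ty E e = (i, j)"
      then show "\<exists>u v. e = {u, v} \<and> degree E u = i \<and> degree E v = j"
        using e by (cases "degree E u \<le> degree E v") (auto simp: ty_pair min_def max_def insert_commute)
    qed
  qed
  thus ?thesis by (simp add: me_def)
qed

lemma deg_count:
  assumes sg: "simple_graph V E"
  shows "(\<Sum>v\<in>{v\<in>V. degree E v = k}. degree E v) = (\<Sum>e\<in>E. card {x\<in>e. degree E x = k})"
proof -
  have fE: "finite E" and fV: "finite V" using sg_finite[OF sg] by auto
  let ?D = "{v\<in>V. degree E v = k}"
  have "(\<Sum>v\<in>?D. degree E v) = (\<Sum>v\<in>?D. \<Sum>e\<in>E. if v \<in> e then 1 else 0)"
  proof (rule sum.cong[OF refl])
    fix v
    have "degree E v = sum (\<lambda>_. 1::nat) {e\<in>E. v \<in> e}" by (simp add: degree_def)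
    also have "\<dots> = (\<Sum>e\<in>E. if v \<in> e then 1 else 0)" using sum.inter_filter[OF fE, of "\<lambda>_. 1::nat" "\<lambda>e. v \<in> e"] by simp
    finally show "degree E v = (\<Sum>e\<in>E. if v \<in> e then 1 else 0)" .
  qed
  also have "\<dots> = (\<Sum>e\<in>E. \<Sum>v\<in>?D. if v \<in> e then 1 else 0)" by (rule sum.swap)
  also have "\<dots> = (\<Sum>e\<in>E. card {x\<in>e. degree E x = k})"
  proof (rule sum.cong[OF refl])
    fix e assume "e \<in> E"
    hence eV: "e \<subseteq> V" by (rule sg_subset[OF sg])
    have fD: "finite ?D" using fV by simp
    have "(\<Sum>v\<in>?D. if v \<in> e then 1 else 0) = sum (\<lambda>_. 1::nat) {v\<in>?D. v \<in> e}"
      using sum.inter_filter[OF fD, of "\<lambda>_. 1::nat" "\<lambda>v. v \<in> e"] by simp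
    also have "{v\<in>?D. v \<in> e} = {x\<in>e. degree E x = k}" using eV by auto
    finally show "(\<Sum>v\<in>?D. if v \<in> e then 1 else 0) = card {x\<in>e. degree E x = k}" by simp
  qed
  finally show ?thesis .
qed

lemma deg_count2:
  assumes sg: "simple_graph V E"
  shows "k * nv V E k = (\<Sum>e\<in>E. card {x\<in>e. degree E x = k})"
proof -
  have "(\<Sum>v\<in>{v\<in>V. degree E v = k}. degree E v) = (\<Sum>v\<in>{v\<in>V. degree E v = k}. k)"
    by (rule sum.cong) auto
  thus ?thesis using deg_count[OF sg, of k] by (simp add: nv_def mult.commute)
qed

definition Types :: "(nat \<times> nat) set" where
  "Types = {(1,1),(1,2),(1,3),(1,4),(2,2),(2,3),(2,4),(3,3),(3,4),(4,4)}"

lemma range14: "1 \<le> x \<Longrightarrow> x \<le> (4::nat) \<Longrightarrow> x \<in> {1,2,3,4}" by auto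

lemma mm_Types: fixes a b :: nat assumes "a \<in> {1,2,3,4}" "b \<in> {1,2,3,4}"
  shows "(min a b, max a b) \<in> Types"
  using assms unfolding Types_def by (elim insertE emptyE; simp)

lemma ty_in_Types:
  assumes cu: "chemical_unicyclic n V E" and e: "e \<in> E"
  shows "ty E e \<in> Types"
proof -
  have sg: "simple_graph V E" using cu by (simp add: chemical_unicyclic_def)
  obtain u v where uv: "e = {u, v}" "u \<noteq> v" "u \<in> V" "v \<in> V" by (rule sg_edge[OF sg e])
  have "degree E u \<ge> 1" "degree E v \<ge> 1" using degree_pos[OF sg e] uv by auto
  moreover have "degree E u \<le> 4" "degree E v \<le> 4" using cu uv by (auto simp: chemical_unicyclic_def)
  ultimately have "degree E u \<in> {1,2,3,4}" "degree E v \<in> {1,2,3,4}" using range14 by blast+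
  thus ?thesis unfolding uv ty_pair by (rule mm_Types)
qed



lemma sum_Types: "(\<Sum>t\<in>Types. f t) = f (1,1) + f (1,2) + f (1,3) + f (1,4) + f (2,2) + f (2,3)
   + f (2,4) + f (3,3) + f (3,4) + f (4,4)"
  by (simp add: Types_def add.assoc)
lemma sum_over_types:
  fixes H :: "nat \<times> nat \<Rightarrow> 'b::comm_semiring_1"
  assumes cu: "chemical_unicyclic n V E" and h: "\<And>e. e \<in> E \<Longrightarrow> h e = H (ty E e)"
  shows "sum h E = (\<Sum>t\<in>Types. of_nat (me E (fst t) (snd t)) * H t)"
proof -
  have sg: "simple_graph V E" using cu by (simp add: chemical_unicyclic_def)
  have "sum h E = (\<Sum>t\<in>Types. of_nat (card {e\<in>E. ty E e = t}) * H t)"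
  proof (rule sum_by_type)
    show "finite E" using sg_finite[OF sg] by simp
    show "ty E ` E \<subseteq> Types" using ty_in_Types[OF cu] by blast
    show "finite Types" by (simp add: Types_def)
    show "\<And>x. x \<in> E \<Longrightarrow> h x = H (ty E x)" by (rule h)
  qed
  also have "\<dots> = (\<Sum>t\<in>Types. of_nat (me E (fst t) (snd t)) * H t)"
  proof (rule sum.cong[OF refl])
    fix t assume "t \<in> Types"
    hence "fst t \<le> snd t" unfolding Types_def by (elim insertE emptyE; simp)
    hence "me E (fst t) (snd t) = card {e\<in>E. ty E e = t}" using me_ty[OF sg] by simp
    thus "of_nat (card {e\<in>E. ty E e = t}) * H t = of_nat (me E (fst t) (snd t)) * H t" by simp
  qed
  finally show ?thesis .
qed

lemma card_E_types:
  assumes cu: "chemical_unicyclic n V E"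
  shows "n = me E 1 1 + me E 1 2 + me E 1 3 + me E 1 4 + me E 2 2 + me E 2 3 + me E 2 4
     + me E 3 3 + me E 3 4 + me E 4 4"
proof -
  have "card E = (\<Sum>e\<in>E. (\<lambda>_. 1::nat) (ty E e))" by simp
  also have "\<dots> = (\<Sum>t\<in>Types. of_nat (me E (fst t) (snd t)) * (1::nat))"
    by (rule sum_over_types[OF cu]) simp
  finally show ?thesis using cu by (simp add: sum_Types chemical_unicyclic_def)
qed

lemma card_filter2:
  assumes "u \<noteq> v"
  shows "card {x\<in>{u, v}. P x} = (if P u then 1 else 0) + (if P v then 1 else 0)"
proof -
  have "{x\<in>{u, v}. P x} = (if P u then {u} else {}) \<union> (if P v then {v} else {})" by auto
  thus ?thesis using assms by simp
qed

definition Hk :: "nat \<Rightarrow> nat \<times> nat \<Rightarrow> nat" where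
  "Hk k t = (if fst t = k then 1 else 0) + (if snd t = k then 1 else 0)"

lemma deg_types:
  assumes cu: "chemical_unicyclic n V E"
  shows "k * nv V E k = me E 1 1 * Hk k (1,1) + me E 1 2 * Hk k (1,2) + me E 1 3 * Hk k (1,3)
     + me E 1 4 * Hk k (1,4) + me E 2 2 * Hk k (2,2) + me E 2 3 * Hk k (2,3) + me E 2 4 * Hk k (2,4)
     + me E 3 3 * Hk k (3,3) + me E 3 4 * Hk k (3,4) + me E 4 4 * Hk k (4,4)"
proof -
  have sg: "simple_graph V E" using cu by (simp add: chemical_unicyclic_def)
  have "k * nv V E k = (\<Sum>e\<in>E. card {x\<in>e. degree E x = k})" by (rule deg_count2[OF sg])
  also have "\<dots> = (\<Sum>t\<in>Types. of_nat (me E (fst t) (snd t)) * Hk k t)"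
  proof (rule sum_over_types[OF cu])
    fix e assume "e \<in> E"
    then obtain u v where uv: "e = {u, v}" "u \<noteq> v" by (rule sg_edge[OF sg])
    show "card {x\<in>e. degree E x = k} = Hk k (ty E e)"
      unfolding uv ty_pair Hk_def card_filter2[OF uv(2)]
      by (simp add: min_def max_def)
  qed
  finally show ?thesis by (simp add: sum_Types)
qed

definition cval :: "nat \<times> nat \<Rightarrow> real" where
  "cval t = sqrt ((real (fst t) - 1)^2 + (real (snd t) - 1)^2)"

lemma SO_types:
  assumes cu: "chemical_unicyclic n V E"
  shows "SO_red E = me E 1 1 * cval (1,1) + me E 1 2 * cval (1,2) + me E 1 3 * cval (1,3)
     + me E 1 4 * cval (1,4) + me E 2 2 * cval (2,2) + me E 2 3 * cval (2,3) + me E 2 4 * cval (2,4)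
     + me E 3 3 * cval (3,3) + me E 3 4 * cval (3,4) + me E 4 4 * cval (4,4)"
proof -
  have sg: "simple_graph V E" using cu by (simp add: chemical_unicyclic_def)
  have "SO_red E = (\<Sum>t\<in>Types. of_nat (me E (fst t) (snd t)) * cval t)"
    unfolding SO_red_def
  proof (rule sum_over_types[OF cu])
    fix e assume "e \<in> E"
    then obtain u v where uv: "e = {u, v}" "u \<noteq> v" by (rule sg_edge[OF sg])
    show "sqrt (\<Sum>x\<in>e. (real (degree E x) - 1)^2) = cval (ty E e)"
      unfolding uv ty_pair cval_def using uv(2)
      by (cases "degree E u \<le> degree E v") (auto simp: min_def max_def add.commute)
  qed
  thus ?thesis by (simp add: sum_Types)
qed



lemma closed_all:
  assumes cg: "connected_graph V E" and x: "x \<in> S" and SV: "S \<subseteq> V"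
    and cl: "\<And>w y. w \<in> S \<Longrightarrow> adj E w y \<Longrightarrow> y \<in> S"
  shows "V \<subseteq> S"
proof
  fix v assume v: "v \<in> V"
  have "(adj E)\<^sup>*\<^sup>* x v" using cg x SV v unfolding connected_graph_def by blast
  then show "v \<in> S"
  proof (induction rule: rtranclp_induct)
    case base show ?case by (rule x)
  next
    case (step y z) thus ?case using cl by blast
  qed
qed

lemma nv0:
  assumes cu: "chemical_unicyclic n V E" and n: "n \<ge> 2"
  shows "nv V E 0 = 0"
proof (rule ccontr)
  assume "nv V E 0 \<noteq> 0"
  then obtain v where v: "v \<in> V" "degree E v = 0" unfolding nv_def
    by (metis (mono_tags, lifting) card.empty empty_Collect_eq)
  have sg: "simple_graph V E" and cg: "connected_graph V E" and cV: "card V = n"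
    using cu by (auto simp: chemical_unicyclic_def)
  have "V \<subseteq> {v}"
  proof (rule closed_all[OF cg])
    show "v \<in> {v}" "{v} \<subseteq> V" using v by auto
    fix w y assume "w \<in> {v}" "adj E w y"
    hence "{v, y} \<in> E" by (simp add: adj_def)
    hence "degree E v \<ge> 1" by (rule degree_pos[OF sg]) simp
    thus "y \<in> {v}" using v by simp
  qed
  hence "card V \<le> card {v}" by (intro card_mono) simp_all
  hence "card V \<le> 1" by simp
  thus False using cV n by simp
qed

lemma me11:
  assumes cu: "chemical_unicyclic n V E" and n: "n \<ge> 3"
  shows "me E 1 1 = 0"
proof (rule ccontr)
  have sg: "simple_graph V E" and cg: "connected_graph V E" and cV: "card V = n"
    using cu by (auto simp: chemical_unicyclic_def)
  assume "me E 1 1 \<noteq> 0"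
  hence "{e\<in>E. \<exists>u v. e = {u, v} \<and> degree E u = 1 \<and> degree E v = 1} \<noteq> {}"
    unfolding me_def by (metis card.empty)
  then obtain e u v where e: "e \<in> E" "e = {u, v}" "degree E u = 1" "degree E v = 1" by blast
  have uvV: "{u, v} \<subseteq> V" using sg_subset[OF sg e(1)] e(2) by simp
  have one: "{a\<in>E. w \<in> a} = {{u, v}}" if w: "w \<in> {u, v}" for w
  proof -
    have "degree E w = 1" using w e(3,4) by blast
    hence "card {a\<in>E. w \<in> a} = 1" by (simp add: degree_def)
    then obtain a where a: "{a\<in>E. w \<in> a} = {a}" by (rule card_1_singletonE)
    have "{u, v} \<in> {a\<in>E. w \<in> a}" using e(1,2) w by simp
    hence "{u, v} = a" using a by simp
    thus ?thesis using a by simp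
  qed
  have "V \<subseteq> {u, v}"
  proof (rule closed_all[OF cg])
    show "u \<in> {u, v}" by simp
    show "{u, v} \<subseteq> V" by (rule uvV)
    fix w y assume w: "w \<in> {u, v}" and "adj E w y"
    hence "{w, y} \<in> {a\<in>E. w \<in> a}" by (simp add: adj_def)
    hence "{w, y} = {u, v}" using one[OF w] by simp
    thus "y \<in> {u, v}" by (metis insertI1 insertI2)
  qed
  hence "card V \<le> card {u, v}" by (intro card_mono) simp_all
  also have "card {u, v} \<le> 2" by (simp add: card_insert_if)
  finally have "card V \<le> 2" .
  thus False using cV n by simp
qed

lemma mekk:
  assumes sg: "simple_graph V E"
  shows "card {v\<in>V. degree E v = k} \<le> 2 \<Longrightarrow> me E k k \<le> 1"
    and "card {v\<in>V. degree E v = k} \<le> 1 \<Longrightarrow> me E k k = 0"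
proof -
  let ?D = "{v\<in>V. degree E v = k}"
  let ?A = "{e\<in>E. \<exists>u v. e = {u, v} \<and> degree E u = k \<and> degree E v = k}"
  have fD: "finite ?D" using sg_finite[OF sg] by simp
  have fE: "finite E" using sg_finite[OF sg] by simp
  have sub: "e \<subseteq> ?D" and c2: "card e = 2" if "e \<in> ?A" for e
  proof -
    from that obtain u v where uv: "e \<in> E" "e = {u, v}" "degree E u = k" "degree E v = k" by blast
    obtain a b where ab: "e = {a, b}" "a \<noteq> b" using sg_edge[OF sg uv(1)] by blast
    have "e \<subseteq> V" using sg_subset[OF sg uv(1)] .
    thus "e \<subseteq> ?D" using uv by auto
    show "card e = 2" using ab by simp
  qed
  show "me E k k \<le> 1" if "card ?D \<le> 2"
  proof -
    have "?A \<subseteq> {?D}"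
    proof
      fix e assume "e \<in> ?A"
      hence "card e \<le> card ?D" using card_mono[OF fD sub] by blast
      hence "card e = card ?D" using c2[OF \<open>e \<in> ?A\<close>] that by simp
      hence "e = ?D" using card_subset_eq[OF fD sub[OF \<open>e \<in> ?A\<close>]] by blast
      thus "e \<in> {?D}" by simp
    qed
    hence "card ?A \<le> card {?D}" by (intro card_mono) auto
    thus ?thesis by (simp add: me_def)
  qed
  show "me E k k = 0" if "card ?D \<le> 1"
  proof -
    have "?A = {}"
    proof (rule ccontr)
      assume "?A \<noteq> {}"
      then obtain e where "e \<in> ?A" by blast
      hence "card e \<le> card ?D" using card_mono[OF fD sub] by blast
      thus False using c2[OF \<open>e \<in> ?A\<close>] that by simp
    qed
    thus ?thesis unfolding me_def by (metis card.empty)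
  qed
qed

lemma range04: "x \<le> (4::nat) \<Longrightarrow> x \<in> {0,1,2,3,4}" by auto

lemma nv_sum:
  assumes cu: "chemical_unicyclic n V E"
  shows "n = nv V E 0 + nv V E 1 + nv V E 2 + nv V E 3 + nv V E 4"
proof -
  have sg: "simple_graph V E" using cu by (simp add: chemical_unicyclic_def)
  have fV: "finite V" using sg_finite[OF sg] by simp
  have "degree E ` V \<subseteq> {0,1,2,3,4}"
  proof
    fix d assume "d \<in> degree E ` V"
    then obtain v where "v \<in> V" "d = degree E v" by blast
    hence "d \<le> 4" using cu unfolding chemical_unicyclic_def by blast
    thus "d \<in> {0,1,2,3,4}" by (rule range04)
  qed
  from sum.group[OF fV _ this, of "\<lambda>_. 1::nat"]
  have "(\<Sum>k\<in>{0,1,2,3,4}. card {v\<in>V. degree E v = k}) = card V" by simp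
  thus ?thesis using cu by (simp add: nv_def chemical_unicyclic_def)
qed

lemma profile_intro:
  assumes "me E 1 1 = p 1 1" "me E 1 2 = p 1 2" "me E 1 3 = p 1 3" "me E 1 4 = p 1 4"
    "me E 2 2 = p 2 2" "me E 2 3 = p 2 3" "me E 2 4 = p 2 4" "me E 3 3 = p 3 3"
    "me E 3 4 = p 3 4" "me E 4 4 = p 4 4"
  shows "edge_profile E p"
  unfolding edge_profile_def
proof (intro allI impI)
  fix i j :: nat assume "1 \<le> i" "i \<le> j" "j \<le> 4"
  have "i \<in> {1,2,3,4}" by (rule range14) (use \<open>1 \<le> i\<close> \<open>i \<le> j\<close> \<open>j \<le> 4\<close> in linarith)+
  moreover have "j \<in> {1,2,3,4}" by (rule range14) (use \<open>1 \<le> i\<close> \<open>i \<le> j\<close> \<open>j \<le> 4\<close> in linarith)+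
  ultimately have "(i = 1 \<or> i = 2 \<or> i = 3 \<or> i = 4) \<and> (j = 1 \<or> j = 2 \<or> j = 3 \<or> j = 4)" by simp
  thus "me E i j = p i j" using assms \<open>i \<le> j\<close> by auto
qed



lemma cvals: "cval (1,1) = 0" "cval (1,2) = 1" "cval (1,3) = 2" "cval (1,4) = 3"
  "cval (2,2) = sqrt 2" "cval (2,3) = sqrt 5" "cval (2,4) = sqrt 10" "cval (3,3) = sqrt 8"
  "cval (3,4) = sqrt 13" "cval (4,4) = sqrt 18"
proof -
  have a: "sqrt 4 = 2" using real_sqrt_abs[of 2] by (simp add: power2_eq_square)
  have b: "sqrt 9 = 3" using real_sqrt_abs[of 3] by (simp add: power2_eq_square)
  show "cval (1,1) = 0" "cval (1,2) = 1" "cval (1,3) = 2" "cval (1,4) = 3"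
  "cval (2,2) = sqrt 2" "cval (2,3) = sqrt 5" "cval (2,4) = sqrt 10" "cval (3,3) = sqrt 8"
  "cval (3,4) = sqrt 13" "cval (4,4) = sqrt 18" by (simp_all add: cval_def power2_eq_square a b)
qed

lemma sqrt_bounds:
  "(1414213 / 1000000) \<le> sqrt 2" "sqrt 2 \<le> (1414214 / 1000000)"
  "(2236067 / 1000000) \<le> sqrt 5" "sqrt 5 \<le> (2236068 / 1000000)"
  "(3162277 / 1000000) \<le> sqrt 10"
  "(2828427 / 1000000) \<le> sqrt 8" "sqrt 8 \<le> (2828428 / 1000000)"
  "(3605551 / 1000000) \<le> sqrt 13"
  "(4242640 / 1000000) \<le> sqrt 18"
  by (rule real_le_rsqrt real_le_lsqrt; simp add: power2_eq_square)+

lemma profile_val: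
  "edge_profile E p \<Longrightarrow> 1 \<le> i \<Longrightarrow> i \<le> j \<Longrightarrow> j \<le> 4 \<Longrightarrow> me E i j = p i j"
  unfolding edge_profile_def by blast

lemma main_arith:
  fixes m12 m13 m14 m22 m23 m24 m33 m34 m44 a b :: nat
  assumes L: "m12 + m13 + m14 = a + 2 * b"
    and T: "m13 + m23 + 2 * m33 + m34 = 3 * a"
    and F: "m14 + m24 + m34 + 2 * m44 = 4 * b"
    and ab: "a \<ge> 3 \<or> b \<ge> 1"
  shows "2 + 4 * sqrt 5 + sqrt 8 + (real (m12 + m13 + m14 + m22 + m23 + m24 + m33 + m34 + m44) - 7) * sqrt 2
    < real m12 + 2 * real m13 + 3 * real m14 + real m22 * sqrt 2 + real m23 * sqrt 5 + real m24 * sqrt 10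
      + real m33 * sqrt 8 + real m34 * sqrt 13 + real m44 * sqrt 18"
proof -
  have L': "real m12 + real m13 + real m14 = real a + 2 * real b"
    using arg_cong[OF L, of real] by simp
  have T': "real m13 + real m23 + 2 * real m33 + real m34 = 3 * real a"
    using arg_cong[OF T, of real] by simp
  have F': "real m14 + real m24 + real m34 + 2 * real m44 = 4 * real b"
    using arg_cong[OF F, of real] by simp
  have ab': "real a \<ge> 3 \<or> real b \<ge> 1" using ab by auto
  note sb = sqrt_bounds
  have nn_a: "real a \<ge> 0" and nn_b: "real b \<ge> 0" and nn_m13: "real m13 \<ge> 0" and nn_m14: "real m14 \<ge> 0"
    and nn_m23: "real m23 \<ge> 0" and nn_m24: "real m24 \<ge> 0" and nn_m33: "real m33 \<ge> 0"
    and nn_m34: "real m34 \<ge> 0" and nn_m44: "real m44 \<ge> 0" by simp_all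
  have t12: "real m12 * (1 - sqrt 2) \<ge> real m12 * (-(414214 / 1000000))"
    by (rule mult_left_mono) (use sb in auto)
  have t13: "real m13 * (2 - sqrt 2) \<ge> real m13 * (585786 / 1000000)"
    by (rule mult_left_mono) (use sb in auto)
  have t14: "real m14 * (3 - sqrt 2) \<ge> real m14 * (1585786 / 1000000)"
    by (rule mult_left_mono) (use sb in auto)
  have t23: "real m23 * (sqrt 5 - sqrt 2) \<ge> real m23 * (821853 / 1000000)"
    by (rule mult_left_mono) (use sb in auto)
  have t24: "real m24 * (sqrt 10 - sqrt 2) \<ge> real m24 * (1748063 / 1000000)"
    by (rule mult_left_mono) (use sb in auto)
  have t33: "real m33 * (sqrt 8 - sqrt 2) \<ge> real m33 * (1414213 / 1000000)"
    by (rule mult_left_mono) (use sb in auto)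
  have t34: "real m34 * (sqrt 13 - sqrt 2) \<ge> real m34 * (2191337 / 1000000)"
    by (rule mult_left_mono) (use sb in auto)
  have t44: "real m44 * (sqrt 18 - sqrt 2) \<ge> real m44 * (2828426 / 1000000)"
    by (rule mult_left_mono) (use sb in auto)
  have id: "(real m12 + 2 * real m13 + 3 * real m14 + real m22 * sqrt 2 + real m23 * sqrt 5 + real m24 * sqrt 10
      + real m33 * sqrt 8 + real m34 * sqrt 13 + real m44 * sqrt 18)
    - (2 + 4 * sqrt 5 + sqrt 8 + (real (m12 + m13 + m14 + m22 + m23 + m24 + m33 + m34 + m44) - 7) * sqrt 2)
    = real m12 * (1 - sqrt 2) + real m13 * (2 - sqrt 2) + real m14 * (3 - sqrt 2)
      + real m23 * (sqrt 5 - sqrt 2) + real m24 * (sqrt 10 - sqrt 2) + real m33 * (sqrt 8 - sqrt 2)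
      + real m34 * (sqrt 13 - sqrt 2) + real m44 * (sqrt 18 - sqrt 2) - (2 + 4 * sqrt 5 + sqrt 8 - 7 * sqrt 2)"
    by (simp add: algebra_simps)
  have pos: "0 < real m12 * (1 - sqrt 2) + real m13 * (2 - sqrt 2) + real m14 * (3 - sqrt 2)
      + real m23 * (sqrt 5 - sqrt 2) + real m24 * (sqrt 10 - sqrt 2) + real m33 * (sqrt 8 - sqrt 2)
      + real m34 * (sqrt 13 - sqrt 2) + real m44 * (sqrt 18 - sqrt 2) - (2 + 4 * sqrt 5 + sqrt 8 - 7 * sqrt 2)"
    using ab'
  proof
    assume "real a \<ge> 3" thus ?thesis
      using t12 t13 t14 t23 t24 t33 t34 t44 L' T' F' sb nn_b nn_m13
        nn_m14 nn_m23 nn_m24 nn_m33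
        nn_m34 nn_m44 by linarith
  next
    assume "real b \<ge> 1" thus ?thesis
      using t12 t13 t14 t23 t24 t33 t34 t44 L' T' F' sb nn_a nn_m13
        nn_m14 nn_m23 nn_m24 nn_m33
        nn_m34 nn_m44 by linarith
  qed
  show ?thesis using id pos by linarith
qed

lemma a2_arith:
  fixes m12 m13 m22 m23 m33 :: nat
  assumes L: "m12 + m13 = 2" and T: "m13 + m23 + 2 * m33 = 6" and m33: "m33 \<le> 1"
    and not9: "\<not> (m13 = 0 \<and> m33 = 1)"
  shows "2 + 4 * sqrt 5 + sqrt 8 + (real (m12 + m13 + m22 + m23 + m33) - 7) * sqrt 2
    < real m12 + 2 * real m13 + real m22 * sqrt 2 + real m23 * sqrt 5 + real m33 * sqrt 8"
proof -
  have c: "(m13 = 0 \<and> m33 = 0) \<or> (m13 = 1 \<and> m33 = 0) \<or> (m13 = 2 \<and> m33 = 0)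
      \<or> (m13 = 1 \<and> m33 = 1) \<or> (m13 = 2 \<and> m33 = 1)" using L m33 not9 by auto
  have m12: "m12 = 2 - m13" and m23: "m23 = 6 - m13 - 2 * m33" using L T by auto
  note sb = sqrt_bounds
  show ?thesis using c unfolding m12 m23
    by - (elim disjE conjE; simp add: algebra_simps; use sb in linarith)
qed



theorem theorem3p7:
  fixes n :: nat
    and V1 :: "'a set" and E1 :: "'a set set"
    and V2 :: "'b set" and E2 :: "'b set set"
    and V3 :: "'c set" and E3 :: "'c set set"
    and V4 :: "'d set" and E4 :: "'d set set"
    and V :: "'e set" and E :: "'e set set"
  assumes "n \<ge> 7"
    and "alpha1 n V1 E1"
    and "alpha3 n V2 E2"
    and "alpha2 n V3 E3"
    and "alpha9 n V4 E4"
    and "chemical_unicyclic n V E"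
    and "\<not> alpha1 n V E" and "\<not> alpha2 n V E" and "\<not> alpha3 n V E" and "\<not> alpha9 n V E"
  shows "SO_red E1 < SO_red E2 \<and> SO_red E2 < SO_red E3 \<and>
         SO_red E3 < SO_red E4 \<and> SO_red E4 < SO_red E"
proof -
  have n7: "n \<ge> 7" by (rule assms(1))
  note sb = sqrt_bounds
  have r3: "real (n - 3) = real n - 3" and r4: "real (n - 4) = real n - 4"
    and r7: "real (n - 7) = real n - 7" using n7 by (simp_all add: of_nat_diff)
  have cu1: "chemical_unicyclic n V1 E1"
    and p1: "edge_profile E1 (\<lambda>i j. if (i, j) = (2, 2) then n else 0)"
    using assms(2) by (simp_all add: alpha1_def)
  have SO1: "SO_red E1 = real n * sqrt 2"
    using SO_types[OF cu1] profile_val[OF p1] by (simp add: cvals cvals[unfolded One_nat_def])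
  have cu2: "chemical_unicyclic n V2 E2"
    and p2: "edge_profile E2 (\<lambda>i j. if (i, j) = (1, 2) then 1 else if (i, j) = (2, 3) then 3
                         else if (i, j) = (2, 2) then n - 4 else 0)"
    using assms(3) by (simp_all add: alpha3_def)
  have SO2: "SO_red E2 = 1 + 3 * sqrt 5 + (real n - 4) * sqrt 2"
    using SO_types[OF cu2] profile_val[OF p2] by (simp add: cvals cvals[unfolded One_nat_def] r4)
  have cu3: "chemical_unicyclic n V3 E3"
    and p3: "edge_profile E3 (\<lambda>i j. if (i, j) = (1, 3) then 1 else if (i, j) = (2, 3) then 2
                         else if (i, j) = (2, 2) then n - 3 else 0)"
    using assms(4) by (simp_all add: alpha2_def)
  have SO3: "SO_red E3 = 2 + 2 * sqrt 5 + (real n - 3) * sqrt 2"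
    using SO_types[OF cu3] profile_val[OF p3] by (simp add: cvals cvals[unfolded One_nat_def] r3)
  have cu4: "chemical_unicyclic n V4 E4"
    and p4: "edge_profile E4 (\<lambda>i j. if (i, j) = (1, 2) then 2 else if (i, j) = (2, 3) then 4
                         else if (i, j) = (3, 3) then 1
                         else if (i, j) = (2, 2) then n - 7 else 0)"
    using assms(5) by (simp_all add: alpha9_def)
  have SO4: "SO_red E4 = 2 + 4 * sqrt 5 + sqrt 8 + (real n - 7) * sqrt 2"
    using SO_types[OF cu4] profile_val[OF p4] by (simp add: cvals cvals[unfolded One_nat_def] r7)
  have c12: "SO_red E1 < SO_red E2" unfolding SO1 SO2 using sb by (simp add: algebra_simps)
  have c23: "SO_red E2 < SO_red E3" unfolding SO2 SO3 using sb by (simp add: algebra_simps)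
  have c34: "SO_red E3 < SO_red E4" unfolding SO3 SO4 using sb by (simp add: algebra_simps)
  have cu: "chemical_unicyclic n V E" by (rule assms(6))
  have sg: "simple_graph V E" using cu by (simp add: chemical_unicyclic_def)
  have N0: "nv V E 0 = 0" using nv0[OF cu] n7 by simp
  have M11: "me E 1 1 = 0" using me11[OF cu] n7 by simp
  have CE: "n = me E 1 1 + me E 1 2 + me E 1 3 + me E 1 4 + me E 2 2 + me E 2 3 + me E 2 4
     + me E 3 3 + me E 3 4 + me E 4 4" by (rule card_E_types[OF cu])
  have D1: "nv V E 1 = 2 * me E 1 1 + me E 1 2 + me E 1 3 + me E 1 4"
    using deg_types[OF cu, of 1] by (simp add: Hk_def)
  have D2: "2 * nv V E 2 = me E 1 2 + 2 * me E 2 2 + me E 2 3 + me E 2 4"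
    using deg_types[OF cu, of 2] by (simp add: Hk_def)
  have D3: "3 * nv V E 3 = me E 1 3 + me E 2 3 + 2 * me E 3 3 + me E 3 4"
    using deg_types[OF cu, of 3] by (simp add: Hk_def)
  have D4: "4 * nv V E 4 = me E 1 4 + me E 2 4 + me E 3 4 + 2 * me E 4 4"
    using deg_types[OF cu, of 4] by (simp add: Hk_def)
  have NS: "n = nv V E 0 + nv V E 1 + nv V E 2 + nv V E 3 + nv V E 4" by (rule nv_sum[OF cu])
  have N1: "nv V E 1 = nv V E 3 + 2 * nv V E 4" using N0 CE D1 D2 D3 D4 NS by linarith
  have SOG: "SO_red E = real (me E 1 2) + 2 * real (me E 1 3) + 3 * real (me E 1 4)
      + real (me E 2 2) * sqrt 2 + real (me E 2 3) * sqrt 5 + real (me E 2 4) * sqrt 10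
      + real (me E 3 3) * sqrt 8 + real (me E 3 4) * sqrt 13 + real (me E 4 4) * sqrt 18"
    using SO_types[OF cu] M11 by (simp add: cvals cvals[unfolded One_nat_def])
  have mainG: "SO_red E4 < SO_red E" if ab: "nv V E 3 \<ge> 3 \<or> nv V E 4 \<ge> 1"
  proof -
    have L: "me E 1 2 + me E 1 3 + me E 1 4 = nv V E 3 + 2 * nv V E 4" using D1 N1 M11 by linarith
    have sumeq: "real (me E 1 2 + me E 1 3 + me E 1 4 + me E 2 2 + me E 2 3 + me E 2 4 + me E 3 3
        + me E 3 4 + me E 4 4) = real n" using CE M11 by simp
    have X: "2 + 4 * sqrt 5 + sqrt 8 + (real n - 7) * sqrt 2
      < real (me E 1 2) + 2 * real (me E 1 3) + 3 * real (me E 1 4) + real (me E 2 2) * sqrt 2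
        + real (me E 2 3) * sqrt 5 + real (me E 2 4) * sqrt 10
        + real (me E 3 3) * sqrt 8 + real (me E 3 4) * sqrt 13 + real (me E 4 4) * sqrt 18"
      using main_arith[where ?m22.0 = "me E 2 2", OF L D3[symmetric] D4[symmetric] ab] by (simp only: sumeq)
    show ?thesis using X SO4 SOG by linarith
  qed
  have "nv V E 4 \<ge> 1 \<or> nv V E 3 \<ge> 3 \<or> (nv V E 4 = 0 \<and> nv V E 3 = 0)
      \<or> (nv V E 4 = 0 \<and> nv V E 3 = 1) \<or> (nv V E 4 = 0 \<and> nv V E 3 = 2)" by arith
  then have c4G: "SO_red E4 < SO_red E"
  proof (elim disjE conjE)
    assume "nv V E 4 \<ge> 1"
    hence ab: "nv V E 3 \<ge> 3 \<or> nv V E 4 \<ge> 1" by simp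
    show ?thesis by (rule mainG[OF ab])
  next
    assume "nv V E 3 \<ge> 3"
    hence ab: "nv V E 3 \<ge> 3 \<or> nv V E 4 \<ge> 1" by simp
    show ?thesis by (rule mainG[OF ab])
  next
    assume a: "nv V E 4 = 0" "nv V E 3 = 0"
    have z: "me E 1 2 = 0" "me E 1 3 = 0" "me E 1 4 = 0" "me E 2 3 = 0" "me E 2 4 = 0"
      "me E 3 3 = 0" "me E 3 4 = 0" "me E 4 4 = 0" using a D1 D3 D4 N1 M11 by simp_all
    have m22: "me E 2 2 = n" using CE z M11 by simp
    have n2: "nv V E 2 = n" using NS N0 N1 a by arith
    have "alpha1 n V E" unfolding alpha1_def
      by (intro conjI cu n2 profile_intro) (simp_all add: z m22 M11 z[unfolded One_nat_def] m22[unfolded One_nat_def] M11[unfolded One_nat_def])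
    thus ?thesis using assms(7) by simp
  next
    assume a: "nv V E 4 = 0" "nv V E 3 = 1"
    have z: "me E 1 4 = 0" "me E 2 4 = 0" "me E 3 4 = 0" "me E 4 4 = 0" using a D4 by simp_all
    have z33: "me E 3 3 = 0" using mekk(2)[OF sg, of 3] a by (simp add: nv_def)
    have L: "me E 1 2 + me E 1 3 = 1" using D1 N1 a M11 z by arith
    have T: "me E 1 3 + me E 2 3 = 3" using D3 a z z33 by arith
    have n2: "nv V E 2 = n - 2" using NS N0 N1 a by arith
    have n1: "nv V E 1 = 1" using N1 a by arith
    show ?thesis
    proof (cases "me E 1 3 = 1")
      case True
      hence v: "me E 1 2 = 0" "me E 2 3 = 2" "me E 2 2 = n - 3" using L T CE M11 z z33 by arith+
      have "alpha2 n V E" unfolding alpha2_def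
        by (intro conjI cu n2 n1 a profile_intro) (simp_all add: z z33 v M11 True z[unfolded One_nat_def] z33[unfolded One_nat_def] v[unfolded One_nat_def] M11[unfolded One_nat_def] True[unfolded One_nat_def])
      thus ?thesis using assms(8) by simp
    next
      case False
      hence v: "me E 1 3 = 0" "me E 1 2 = 1" "me E 2 3 = 3" "me E 2 2 = n - 4"
        using L T CE M11 z z33 by arith+
      have "alpha3 n V E" unfolding alpha3_def
        by (intro conjI cu n2 n1 a profile_intro) (simp_all add: z z33 v M11 z[unfolded One_nat_def] z33[unfolded One_nat_def] v[unfolded One_nat_def] M11[unfolded One_nat_def])
      thus ?thesis using assms(9) by simp
    qed
  next
    assume a: "nv V E 4 = 0" "nv V E 3 = 2"
    have z: "me E 1 4 = 0" "me E 2 4 = 0" "me E 3 4 = 0" "me E 4 4 = 0" using a D4 by simp_all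
    have m33: "me E 3 3 \<le> 1" using mekk(1)[OF sg, of 3] a by (simp add: nv_def)
    have L: "me E 1 2 + me E 1 3 = 2" using D1 N1 a M11 z by arith
    have T: "me E 1 3 + me E 2 3 + 2 * me E 3 3 = 6" using D3 a z by arith
    have n2: "nv V E 2 = n - 4" using NS N0 N1 a by arith
    have n1: "nv V E 1 = 2" using N1 a by arith
    show ?thesis
    proof (cases "me E 1 3 = 0 \<and> me E 3 3 = 1")
      case True
      hence v: "me E 1 3 = 0" "me E 3 3 = 1" "me E 1 2 = 2" "me E 2 3 = 4" "me E 2 2 = n - 7"
        using L T CE M11 z by arith+
      have "alpha9 n V E" unfolding alpha9_def
        by (intro conjI cu n2 n1 a profile_intro) (simp_all add: z v M11 z[unfolded One_nat_def] v[unfolded One_nat_def] M11[unfolded One_nat_def])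
      thus ?thesis using assms(10) by simp
    next
      case False
      have sumeq: "real (me E 1 2 + me E 1 3 + me E 2 2 + me E 2 3 + me E 3 3) = real n"
        using CE M11 z by simp
      have X: "2 + 4 * sqrt 5 + sqrt 8 + (real n - 7) * sqrt 2
        < real (me E 1 2) + 2 * real (me E 1 3) + real (me E 2 2) * sqrt 2
          + real (me E 2 3) * sqrt 5 + real (me E 3 3) * sqrt 8"
        using a2_arith[where ?m22.0 = "me E 2 2", OF L T m33 False] by (simp only: sumeq)
      show ?thesis using X SO4 SOG z by simp
    qed
  qed
  show ?thesis using c12 c23 c34 c4G by simp
qed


end
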